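(* Let $P,Q\in W^{(l)}\setminus\{0\}$. Then: (1) $w(PQ)=w(P)+w(Q)$ and $\overline w(PQ)=\overline w(P)+\overline w(Q)$; in particular $PQ\neq0$. (2) $\ell_{\rho,\sigma}(PQ)=\ell_{\rho,\sigma}(P)\ell_{\rho,\sigma}(Q)$ for all $(\rho,\sigma)\in\mathfrak V$. (3) $v_{\rho,\sigma}(PQ)=v_{\rho,\sigma}(P)+v_{\rho,\sigma}(Q)$ for all $(\rho,\sigma)\in\overline{\mathfrak V}$. (4) $\mathrm{st}_{\rho,\sigma}(PQ)=\mathrm{st}_{\rho,\sigma}(P)+\mathrm{st}_{\rho,\sigma}(Q)$ for all $(\rho,\sigma)\in\mathfrak V$. (5) $\mathrm{en}_{\rho,\sigma}(PQ)=\mathrm{en}_{\rho,\sigma}(P)+\mathrm{en}_{\rho,\sigma}(Q)$ for all $(\rho,\sigma)\in\mathfrak V$. The same properties hold for $P,Q\in L^{(l)}\setminus\{0\}$.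
   Context: $K$ is a field of characteristic zero, $l\in\mathbb{N}$. $W^{(l)}$ is the associative $K$-algebra with $K$-basis $\{X^{i/l}Y^j:i\in\mathbb{Z},j\in\mathbb{N}_0\}$, powers of $X$ multiplying as Laurent monomials and $[Y,X^\alpha]=\alpha X^{\alpha-1}$ for $\alpha\in\frac1l\mathbb{Z}$. $L^{(l)}=K[x^{1/l},x^{-1/l},y]$ (commutative), $\Psi^{(l)}(X^{i/l}Y^j)=x^{i/l}y^j$ ($K$-linear). Supports are sets of exponents with nonzero coefficients (for $W^{(l)}$, via $\Psi^{(l)}$). $\overline{\mathfrak V}=\{(\rho,\sigma)\in\mathbb{Z}^2:\gcd(\rho,\sigma)=1,\rho+\sigma\ge0\}$, $\mathfrak V$ its subset with $\rho+\sigma>0$. For $P\ne0$, $v_{\rho,\sigma}(P)=\max\{\rho a+\sigma b:(a,b)\in\mathrm{Supp}(P)\}$ and $\ell_{\rho,\sigma}(P)$ is the sum of the terms (of $\Psi^{(l)}(P)$) whose exponent attains this maximum. $w(P)$: among the points $(a,b)\in\mathrm{Supp}(P)$ maximizing $a-b$, the one with largest $a$; $\overline w(P)$: among those maximizing $b-a$, the one with largest $b$. $\mathrm{st}_{\rho,\sigma}(P):=w(\ell_{\rho,\sigma}(P))$, $\mathrm{en}_{\rho,\sigma}(P):=\overline w(\ell_{\rho,\sigma}(P))$. *)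

theory Defs
  imports Complex_Main "HOL-Library.Product_Plus"
begin

text \<open>Elements of W^(l) and of L^(l) are represented by their coefficient functions
  on encoded exponents (i, j) :: int \<times> nat, standing for X^(i/l) Y^j (resp. x^(i/l) y^j),
  with finite support.\<close>

definition supp :: "(int \<times> nat \<Rightarrow> 'a::zero) \<Rightarrow> (int \<times> nat) set" where
  "supp P = {e. P e \<noteq> 0}"

definition dec :: "nat \<Rightarrow> int \<times> nat \<Rightarrow> rat \<times> rat" where
  "dec l e = (of_int (fst e) / of_nat l, of_nat (snd e))"

text \<open>Product in W^(l):  (X^(a/l) Y^j)(X^(b/l) Y^k) =
  \<Sum>_{m\<le>j} (j choose m) (b/l)(b/l-1)...(b/l-m+1) X^((a+b)/l - m) Y^(j+k-m),
  which follows from [Y, X^\<alpha>] = \<alpha> X^(\<alpha>-1).\<close>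
definition Wmult :: "nat \<Rightarrow> (int \<times> nat \<Rightarrow> 'a::field_char_0) \<Rightarrow> (int \<times> nat \<Rightarrow> 'a) \<Rightarrow> (int \<times> nat \<Rightarrow> 'a)" where
  "Wmult l P Q = (\<lambda>e. \<Sum>x\<in>supp P. \<Sum>y\<in>supp Q. \<Sum>m\<in>{..snd x}.
     if e = (fst x + fst y - int m * int l, snd x + snd y - m)
     then of_nat (snd x choose m) * (\<Prod>t<m. of_int (fst y) / of_nat l - of_nat t) * P x * Q y
     else 0)"

definition Lmult :: "(int \<times> nat \<Rightarrow> 'a::field_char_0) \<Rightarrow> (int \<times> nat \<Rightarrow> 'a) \<Rightarrow> (int \<times> nat \<Rightarrow> 'a)" where
  "Lmult P Q = (\<lambda>e. \<Sum>x\<in>supp P. \<Sum>y\<in>supp Q. if e = x + y then P x * Q y else 0)"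

definition Vbar :: "(int \<times> int) set" where
  "Vbar = {(\<rho>, \<sigma>). coprime \<rho> \<sigma> \<and> \<rho> + \<sigma> \<ge> 0}"

definition V :: "(int \<times> int) set" where
  "V = {(\<rho>, \<sigma>). coprime \<rho> \<sigma> \<and> \<rho> + \<sigma> > 0}"

definition vval :: "nat \<Rightarrow> int \<Rightarrow> int \<Rightarrow> (int \<times> nat \<Rightarrow> 'a::zero) \<Rightarrow> rat" where
  "vval l \<rho> \<sigma> P = Max ((\<lambda>e. of_int \<rho> * fst (dec l e) + of_int \<sigma> * snd (dec l e)) ` supp P)"

definition lead :: "nat \<Rightarrow> int \<Rightarrow> int \<Rightarrow> (int \<times> nat \<Rightarrow> 'a::zero) \<Rightarrow> (int \<times> nat \<Rightarrow> 'a)" where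
  "lead l \<rho> \<sigma> P = (\<lambda>e. if of_int \<rho> * fst (dec l e) + of_int \<sigma> * snd (dec l e) = vval l \<rho> \<sigma> P
                        then P e else 0)"

definition wpt :: "nat \<Rightarrow> (int \<times> nat \<Rightarrow> 'a::zero) \<Rightarrow> rat \<times> rat" where
  "wpt l P = (THE p. p \<in> dec l ` supp P
      \<and> (\<forall>q \<in> dec l ` supp P. fst q - snd q \<le> fst p - snd p)
      \<and> (\<forall>q \<in> dec l ` supp P. fst q - snd q = fst p - snd p \<longrightarrow> fst q \<le> fst p))"

definition wbar :: "nat \<Rightarrow> (int \<times> nat \<Rightarrow> 'a::zero) \<Rightarrow> rat \<times> rat" where
  "wbar l P = (THE p. p \<in> dec l ` supp P
      \<and> (\<forall>q \<in> dec l ` supp P. snd q - fst q \<le> snd p - fst p)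
      \<and> (\<forall>q \<in> dec l ` supp P. snd q - fst q = snd p - fst p \<longrightarrow> snd q \<le> snd p))"

definition st :: "nat \<Rightarrow> int \<Rightarrow> int \<Rightarrow> (int \<times> nat \<Rightarrow> 'a::zero) \<Rightarrow> rat \<times> rat" where
  "st l \<rho> \<sigma> P = wpt l (lead l \<rho> \<sigma> P)"

definition en :: "nat \<Rightarrow> int \<Rightarrow> int \<Rightarrow> (int \<times> nat \<Rightarrow> 'a::zero) \<Rightarrow> rat \<times> rat" where
  "en l \<rho> \<sigma> P = wbar l (lead l \<rho> \<sigma> P)"

end

theory Submission
  imports Defs "HOL-Library.Product_Lexorder"
begin

definition gf :: "nat \<Rightarrow> int \<Rightarrow> int \<Rightarrow> int \<times> nat \<Rightarrow> rat" where
  "gf l \<rho> \<sigma> e = of_int \<rho> * fst (dec l e) + of_int \<sigma> * snd (dec l e)"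
definition key :: "nat \<Rightarrow> int \<Rightarrow> int \<Rightarrow> int \<times> nat \<Rightarrow> rat \<times> rat \<times> rat" where
  "key l \<rho> \<sigma> e = (gf l \<rho> \<sigma> e, fst (dec l e), snd (dec l e))"

lemma lex_less_add: "(a::rat\<times>rat\<times>rat) < b \<Longrightarrow> a + c < b + c"
proof -
  obtain a1 a2 a3 where a: "a = (a1,a2,a3)" by (cases a) auto
  obtain b1 b2 b3 where b: "b = (b1,b2,b3)" by (cases b) auto
  obtain c1 c2 c3 where c: "c = (c1,c2,c3)" by (cases c) auto
  assume "a < b" then show ?thesis unfolding a b c by (simp add: less_prod_def')
qed
lemma lex_le_add: "(a::rat\<times>rat\<times>rat) \<le> b \<Longrightarrow> a + c \<le> b + c"
  using lex_less_add[of a b c] by (cases "a = b") (auto simp: order_less_imp_le)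
lemma lex_le_add2: "(a::rat\<times>rat\<times>rat) \<le> b \<Longrightarrow> c \<le> d \<Longrightarrow> a + c \<le> b + d"
proof -
  assume ab: "a \<le> b" and cd: "c \<le> d"
  have 1: "a + c \<le> b + c" using ab by (rule lex_le_add)
  have "c + b \<le> d + b" using cd by (rule lex_le_add)
  then have 2: "b + c \<le> b + d" by (simp only: add.commute)
  from 1 2 show ?thesis by (rule order_trans)
qed
lemma lex_less_add2: "(a::rat\<times>rat\<times>rat) < b \<Longrightarrow> c \<le> d \<Longrightarrow> a + c < b + d"
proof -
  assume ab: "a < b" and cd: "c \<le> d"
  have 1: "a + c < b + c" using ab by (rule lex_less_add)
  have "c + b \<le> d + b" using cd by (rule lex_le_add)
  then have 2: "b + c \<le> b + d" by (simp only: add.commute)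
  from 1 2 show ?thesis by (rule order_less_le_trans)
qed

lemma dec_add: "dec l (x + y) = dec l x + dec l y"
  by (cases x; cases y) (simp add: dec_def add_divide_distrib)
lemma dec_inj: "l > 0 \<Longrightarrow> dec l x = dec l y \<Longrightarrow> x = y"
  by (cases x; cases y) (auto simp: dec_def)
lemma gf_add: "gf l r s (x + y) = gf l r s x + gf l r s y"
  by (simp add: gf_def dec_add algebra_simps)
lemma key_add: "key l r s (x + y) = key l r s x + key l r s y"
  by (simp add: key_def gf_add dec_add prod_eq_iff)
lemma key_inj: "l > 0 \<Longrightarrow> key l r s x = key l r s y \<Longrightarrow> x = y"
proof -
  assume l: "l > 0" and k: "key l r s x = key l r s y"
  then have "dec l x = dec l y" by (simp add: key_def prod_eq_iff)
  then show ?thesis using dec_inj[OF l] by blast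
qed


definition Gm :: "(int \<times> nat \<Rightarrow> nat set) \<Rightarrow> (int \<times> nat \<Rightarrow> int \<times> nat \<Rightarrow> nat \<Rightarrow> int \<times> nat)
   \<Rightarrow> (int \<times> nat \<Rightarrow> int \<times> nat \<Rightarrow> nat \<Rightarrow> 'a::field_char_0) \<Rightarrow> (int \<times> nat \<Rightarrow> 'a) \<Rightarrow> (int \<times> nat \<Rightarrow> 'a) \<Rightarrow> int \<times> nat \<Rightarrow> 'a" where
  "Gm S T c P Q = (\<lambda>e. \<Sum>x\<in>supp P. \<Sum>y\<in>supp Q. \<Sum>m\<in>S x. if e = T x y m then c x y m * P x * Q y else 0)"

definition good :: "nat \<Rightarrow> (int \<times> nat \<Rightarrow> nat set) \<Rightarrow> (int \<times> nat \<Rightarrow> int \<times> nat \<Rightarrow> nat \<Rightarrow> int \<times> nat)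
   \<Rightarrow> (int \<times> nat \<Rightarrow> int \<times> nat \<Rightarrow> nat \<Rightarrow> 'a::field_char_0) \<Rightarrow> bool" where
  "good l S T c \<longleftrightarrow> (\<forall>x. finite (S x) \<and> 0 \<in> S x) \<and> (\<forall>x y. T x y 0 = x + y \<and> c x y 0 = 1)
     \<and> (\<forall>x y m. m \<in> S x \<longrightarrow> m \<noteq> 0 \<longrightarrow> dec l (T x y m) = dec l x + dec l y - (of_nat m, of_nat m))"

lemma goodD:
  assumes "good l S T c"
  shows "finite (S x)" "0 \<in> S x" "T x y 0 = x + y" "c x y 0 = 1"
    "m \<in> S x \<Longrightarrow> m \<noteq> 0 \<Longrightarrow> dec l (T x y m) = dec l x + dec l y - (of_nat m, of_nat m)"
  using assms unfolding good_def by blast+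

lemma key_shift:
  assumes "r + s \<ge> 0" "dec l t = dec l x + dec l y - (of_nat m, of_nat m)" "m \<noteq> 0"
  shows "key l r s t < key l r s x + key l r s y"
proof -
  obtain a b where x: "dec l x = (a,b)" by (cases "dec l x") auto
  obtain a' b' where y: "dec l y = (a',b')" by (cases "dec l y") auto
  have t: "dec l t = (a + a' - of_nat m, b + b' - of_nat m)" using assms(2) x y by simp
  have "of_int r * (of_nat m::rat) + of_int s * of_nat m \<ge> 0"
  proof -
    have "of_int r * (of_nat m::rat) + of_int s * of_nat m = of_int (r + s) * of_nat m" by (simp add: algebra_simps)
    also have "\<dots> \<ge> 0" using assms(1) by simp
    finally show ?thesis .
  qed
  then show ?thesis using assms(3) unfolding key_def gf_def x y t
    apply (simp add: less_prod_def' algebra_simps) by linarith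
qed

lemma gf_shift:
  assumes "r + s > 0" "dec l t = dec l x + dec l y - (of_nat m, of_nat m)" "m \<noteq> 0"
  shows "gf l r s t < gf l r s x + gf l r s y"
proof -
  obtain a b where x: "dec l x = (a,b)" by (cases "dec l x") auto
  obtain a' b' where y: "dec l y = (a',b')" by (cases "dec l y") auto
  have t: "dec l t = (a + a' - of_nat m, b + b' - of_nat m)" using assms(2) x y by simp
  have "of_int r * (of_nat m::rat) + of_int s * of_nat m > 0"
  proof -
    have "of_int r * (of_nat m::rat) + of_int s * of_nat m = of_int (r + s) * of_nat m" by (simp add: algebra_simps)
    also have "\<dots> > 0" using assms(1,3) by simp
    finally show ?thesis .
  qed
  then show ?thesis unfolding gf_def x y t
    by (simp add: algebra_simps)
qed

lemma key_le_gf: "key l r s x \<le> key l r s y \<Longrightarrow> gf l r s x \<le> gf l r s y"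
  by (auto simp: key_def)

lemma sum_if_const: "(\<Sum>i\<in>A. if b then f i else 0) = (if b then sum f A else 0)"
  by (cases b) auto

lemma top:
  fixes P Q :: "int \<times> nat \<Rightarrow> 'a::field_char_0"
  assumes g: "good l S T c" and l: "l > 0" and rs: "r + s \<ge> 0"
    and M: "M \<in> supp P" "\<forall>x\<in>supp P. key l r s x \<le> key l r s M"
    and N: "N \<in> supp Q" "\<forall>y\<in>supp Q. key l r s y \<le> key l r s N"
    and fP: "finite (supp P)" and fQ: "finite (supp Q)"
    and e: "key l r s (M + N) \<le> key l r s e"
  shows "Gm S T c P Q e = (if e = M + N then P M * Q N else 0)"
proof -
  let ?K = "key l r s"
  have trm: "(if e = T x y m then c x y m * P x * Q y else 0) =
     (if x = M then if y = N then if m = 0 then (if e = M + N then P M * Q N else 0) else 0 else 0 else 0)"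
    if x: "x \<in> supp P" and y: "y \<in> supp Q" and m: "m \<in> S x" for x y m
  proof (cases "e = T x y m")
    case False
    have "T x y 0 = x + y" using g unfolding good_def by blast
    then show ?thesis using False by auto
  next
    case True
    have xy: "?K x + ?K y \<le> ?K M + ?K N" using M N x y lex_le_add2 by blast
    show ?thesis
    proof (cases "m = 0")
      case False
      have "dec l (T x y m) = dec l x + dec l y - (of_nat m, of_nat m)" using g m False unfolding good_def by blast
      then have "?K e < ?K x + ?K y" using key_shift[OF rs _ False] True by blast
      then have "?K e < ?K (M + N)" unfolding key_add using xy by (rule order_less_le_trans)
      with e have False by (simp add: leD)
      then show ?thesis ..
    next
      case m0: True
      then have ex: "e = x + y" "c x y m = 1" using True goodD[OF g] by auto
      have xM: "x = M"
      proof (rule ccontr)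
        assume "x \<noteq> M"
        then have "?K x < ?K M" using M x key_inj[OF l] by (metis order_le_less)
        then have "?K x + ?K y < ?K M + ?K N" using N y lex_less_add2 by blast
        then have "?K e < ?K (M + N)" unfolding key_add ex(1) .
        with e show False by (simp add: leD)
      qed
      have yN: "y = N"
      proof (rule ccontr)
        assume "y \<noteq> N"
        then have "?K y < ?K N" using N y key_inj[OF l] by (metis order_le_less)
        then have "?K y + ?K x < ?K N + ?K M" using M x lex_less_add2 by blast
        then have "?K e < ?K (M + N)" unfolding key_add ex(1) by (simp only: add.commute)
        with e show False by (simp add: leD)
      qed
      have "e = M + N" using ex xM yN by simp
      then show ?thesis using True ex(2) xM yN m0 by (simp only: simp_thms if_True mult_1_left)
    qed
  qed
  have "Gm S T c P Q e = (\<Sum>x\<in>supp P. \<Sum>y\<in>supp Q. \<Sum>m\<in>S x.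
     (if x = M then if y = N then if m = 0 then (if e = M + N then P M * Q N else 0) else 0 else 0 else 0))"
    unfolding Gm_def using trm by (intro sum.cong refl) auto
  also have "\<dots> = (\<Sum>x\<in>supp P. if x = M then (\<Sum>y\<in>supp Q. if y = N then
      (\<Sum>m\<in>S x. if m = 0 then (if e = M + N then P M * Q N else 0) else 0) else 0) else 0)"
    by (intro sum.cong refl) (simp only: sum_if_const)
  also have "\<dots> = (if e = M + N then P M * Q N else 0)" (is "_ = ?A")
  proof -
    have i: "(\<Sum>m\<in>S x. if m = 0 then ?A else 0) = ?A" for x
      using sum.delta[of "S x" 0 "\<lambda>_. ?A"] goodD(1,2)[OF g] by simp
    have j: "(\<Sum>y\<in>supp Q. if y = N then ?A else 0) = ?A"
      using sum.delta[of "supp Q" N "\<lambda>_. ?A"] fQ N(1) by simp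
    have k: "(\<Sum>x\<in>supp P. if x = M then ?A else 0) = ?A"
      using sum.delta[of "supp P" M "\<lambda>_. ?A"] fP M(1) by simp
    show ?thesis by (simp only: i j k)
  qed
  finally show ?thesis .
qed


lemma ex_argmax:
  fixes K :: "_ \<Rightarrow> 'b::linorder"
  assumes "finite A" "A \<noteq> {}"
  shows "\<exists>M\<in>A. \<forall>x\<in>A. K x \<le> K M"
proof -
  have "Max (K ` A) \<in> K ` A" using assms by (intro Max_in) auto
  then obtain M where M: "M \<in> A" "K M = Max (K ` A)" by auto
  have "\<forall>x\<in>A. K x \<le> K M" using M(2) assms(1) by (auto intro: Max_ge)
  with M(1) show ?thesis by blast
qed

lemma supp_ne: "P \<noteq> (\<lambda>_. 0) \<Longrightarrow> supp P \<noteq> {}"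
  by (auto simp: supp_def)

lemma finite_supp_Gm:
  assumes g: "good l S T c" and fP: "finite (supp P)" and fQ: "finite (supp Q)"
  shows "finite (supp (Gm S T c P Q))"
proof (rule finite_subset)
  show "finite (\<Union>x\<in>supp P. \<Union>y\<in>supp Q. T x y ` S x)"
    using fP fQ goodD(1)[OF g] by auto
  show "supp (Gm S T c P Q) \<subseteq> (\<Union>x\<in>supp P. \<Union>y\<in>supp Q. T x y ` S x)"
  proof
    fix e assume e: "e \<in> supp (Gm S T c P Q)"
    show "e \<in> (\<Union>x\<in>supp P. \<Union>y\<in>supp Q. T x y ` S x)"
    proof (rule ccontr)
      assume "e \<notin> (\<Union>x\<in>supp P. \<Union>y\<in>supp Q. T x y ` S x)"
      then have "Gm S T c P Q e = 0" unfolding Gm_def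
        by (intro sum.neutral ballI) auto
      with e show False by (simp add: supp_def)
    qed
  qed
qed

lemma top_max:
  fixes P Q :: "int \<times> nat \<Rightarrow> 'a::field_char_0"
  assumes g: "good l S T c" and l: "l > 0" and rs: "r + s \<ge> 0"
    and M: "M \<in> supp P" "\<forall>x\<in>supp P. key l r s x \<le> key l r s M"
    and N: "N \<in> supp Q" "\<forall>y\<in>supp Q. key l r s y \<le> key l r s N"
    and fP: "finite (supp P)" and fQ: "finite (supp Q)"
  shows "M + N \<in> supp (Gm S T c P Q)" "\<forall>e\<in>supp (Gm S T c P Q). key l r s e \<le> key l r s (M + N)"
proof -
  have "Gm S T c P Q (M + N) = P M * Q N" using top[OF g l rs M N fP fQ order_refl] by simp
  then show "M + N \<in> supp (Gm S T c P Q)" using M(1) N(1) by (simp add: supp_def)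
  show "\<forall>e\<in>supp (Gm S T c P Q). key l r s e \<le> key l r s (M + N)"
  proof
    fix e assume e: "e \<in> supp (Gm S T c P Q)"
    show "key l r s e \<le> key l r s (M + N)"
    proof (rule ccontr)
      assume "\<not> key l r s e \<le> key l r s (M + N)"
      then have lt: "key l r s (M + N) < key l r s e" by simp
      then have "e \<noteq> M + N" by auto
      then have "Gm S T c P Q e = 0" using top[OF g l rs M N fP fQ order_less_imp_le[OF lt]] by simp
      with e show False by (simp add: supp_def)
    qed
  qed
qed

lemma wpt_char:
  assumes l: "l > 0" and M: "M \<in> supp P" "\<forall>x\<in>supp P. key l 1 (-1) x \<le> key l 1 (-1) M"
  shows "wpt l P = dec l M"
  unfolding wpt_def
proof (rule the_equality)
  have kx: "fst (dec l x) - snd (dec l x) < fst (dec l M) - snd (dec l M) \<or>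
     (fst (dec l x) - snd (dec l x) = fst (dec l M) - snd (dec l M) \<and> fst (dec l x) \<le> fst (dec l M))"
    if "x \<in> supp P" for x
  proof -
    have k: "key l 1 (-1) x \<le> key l 1 (-1) M" using M(2) that by blast
    obtain a b where dx: "dec l x = (a,b)" by (cases "dec l x")
    obtain a' b' where dM: "dec l M = (a',b')" by (cases "dec l M")
    from k show ?thesis unfolding key_def gf_def dx dM by auto
  qed
  show "dec l M \<in> dec l ` supp P \<and>
    (\<forall>q\<in>dec l ` supp P. fst q - snd q \<le> fst (dec l M) - snd (dec l M)) \<and>
    (\<forall>q\<in>dec l ` supp P. fst q - snd q = fst (dec l M) - snd (dec l M) \<longrightarrow> fst q \<le> fst (dec l M))"
    using M(1) kx by fastforce
  fix p assume p: "p \<in> dec l ` supp P \<and>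
      (\<forall>q\<in>dec l ` supp P. fst q - snd q \<le> fst p - snd p) \<and>
      (\<forall>q\<in>dec l ` supp P. fst q - snd q = fst p - snd p \<longrightarrow> fst q \<le> fst p)"
  then obtain x where x: "x \<in> supp P" "p = dec l x" by auto
  have 1: "fst (dec l M) - snd (dec l M) \<le> fst p - snd p" using p M(1) by auto
  have 2: "fst (dec l M) - snd (dec l M) = fst p - snd p" using 1 kx[OF x(1)] x(2) by auto
  have 3: "fst (dec l M) \<le> fst p" using p M(1) 2 by auto
  have 4: "fst p \<le> fst (dec l M)" using kx[OF x(1)] x(2) 2 by auto
  show "p = dec l M" using 2 3 4 by (simp add: prod_eq_iff)
qed

lemma wbar_char:
  assumes l: "l > 0" and M: "M \<in> supp P" "\<forall>x\<in>supp P. key l (-1) 1 x \<le> key l (-1) 1 M"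
  shows "wbar l P = dec l M"
  unfolding wbar_def
proof (rule the_equality)
  have kx: "snd (dec l x) - fst (dec l x) < snd (dec l M) - fst (dec l M) \<or>
     (snd (dec l x) - fst (dec l x) = snd (dec l M) - fst (dec l M) \<and> snd (dec l x) \<le> snd (dec l M))"
    if "x \<in> supp P" for x
  proof -
    have k: "key l (-1) 1 x \<le> key l (-1) 1 M" using M(2) that by blast
    obtain a b where dx: "dec l x = (a,b)" by (cases "dec l x")
    obtain a' b' where dM: "dec l M = (a',b')" by (cases "dec l M")
    from k show ?thesis unfolding key_def gf_def dx dM by auto
  qed
  show "dec l M \<in> dec l ` supp P \<and>
    (\<forall>q\<in>dec l ` supp P. snd q - fst q \<le> snd (dec l M) - fst (dec l M)) \<and>
    (\<forall>q\<in>dec l ` supp P. snd q - fst q = snd (dec l M) - fst (dec l M) \<longrightarrow> snd q \<le> snd (dec l M))"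
    using M(1) kx by fastforce
  fix p assume p: "p \<in> dec l ` supp P \<and>
      (\<forall>q\<in>dec l ` supp P. snd q - fst q \<le> snd p - fst p) \<and>
      (\<forall>q\<in>dec l ` supp P. snd q - fst q = snd p - fst p \<longrightarrow> snd q \<le> snd p)"
  then obtain x where x: "x \<in> supp P" "p = dec l x" by auto
  have 1: "snd (dec l M) - fst (dec l M) \<le> snd p - fst p" using p M(1) by auto
  have 2: "snd (dec l M) - fst (dec l M) = snd p - fst p" using 1 kx[OF x(1)] x(2) by auto
  have 3: "snd (dec l M) \<le> snd p" using p M(1) 2 by auto
  have 4: "snd p \<le> snd (dec l M)" using kx[OF x(1)] x(2) 2 by auto
  show "p = dec l M" using 2 3 4 by (simp add: prod_eq_iff)
qed

lemma vval_char:
  assumes f: "finite (supp P)" and M: "M \<in> supp P" "\<forall>x\<in>supp P. key l r s x \<le> key l r s M"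
  shows "vval l r s P = gf l r s M"
proof -
  have "vval l r s P = Max (gf l r s ` supp P)" unfolding vval_def gf_def by simp
  also have "\<dots> = gf l r s M"
    using f M by (intro Max_eqI) (auto intro: key_le_gf)
  finally show ?thesis .
qed

lemma lead_gf: "lead l r s P e = (if gf l r s e = vval l r s P then P e else 0)"
  by (simp add: lead_def gf_def)

lemma supp_lead: "supp (lead l r s P) \<subseteq> supp P"
  by (auto simp: supp_def lead_gf)


lemma Lmult_super:
  fixes P Q :: "int \<times> nat \<Rightarrow> 'a::field_char_0"
  assumes "finite A" "finite B" "supp P \<subseteq> A" "supp Q \<subseteq> B"
  shows "Lmult P Q e = (\<Sum>x\<in>A. \<Sum>y\<in>B. if e = x + y then P x * Q y else 0)"
proof -
  have "Lmult P Q e = (\<Sum>x\<in>supp P. \<Sum>y\<in>supp Q. if e = x + y then P x * Q y else 0)"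
    by (simp add: Lmult_def)
  also have "\<dots> = (\<Sum>x\<in>supp P. \<Sum>y\<in>B. if e = x + y then P x * Q y else 0)"
  proof (rule sum.cong[OF refl])
    fix x assume "x \<in> supp P"
    show "(\<Sum>y\<in>supp Q. if e = x + y then P x * Q y else 0) = (\<Sum>y\<in>B. if e = x + y then P x * Q y else 0)"
      using assms by (intro sum.mono_neutral_left) (auto simp: supp_def)
  qed
  also have "\<dots> = (\<Sum>x\<in>A. \<Sum>y\<in>B. if e = x + y then P x * Q y else 0)"
  proof (rule sum.mono_neutral_left)
    show "finite A" "supp P \<subseteq> A" using assms by auto
    show "\<forall>i\<in>A - supp P. (\<Sum>y\<in>B. if e = i + y then P i * Q y else 0) = 0"
    proof
      fix i assume "i \<in> A - supp P"
      then have "P i = 0" by (simp add: supp_def)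
      then show "(\<Sum>y\<in>B. if e = i + y then P i * Q y else 0) = 0" by (intro sum.neutral) simp
    qed
  qed
  finally show ?thesis .
qed

lemma argmax_supp:
  assumes "finite (supp P)" "P \<noteq> (\<lambda>_. 0)"
  shows "\<exists>M\<in>supp P. \<forall>x\<in>supp P. key l r s x \<le> key l r s M"
  using ex_argmax[OF assms(1) supp_ne[OF assms(2)]] .

lemma vval_Gm:
  fixes P Q :: "int \<times> nat \<Rightarrow> 'a::field_char_0"
  assumes g: "good l S T c" and l: "l > 0" and rs: "r + s \<ge> 0"
    and fP: "finite (supp P)" and fQ: "finite (supp Q)"
    and P0: "P \<noteq> (\<lambda>_. 0)" and Q0: "Q \<noteq> (\<lambda>_. 0)"
  shows "vval l r s (Gm S T c P Q) = vval l r s P + vval l r s Q"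
proof -
  obtain M where M: "M \<in> supp P" "\<forall>x\<in>supp P. key l r s x \<le> key l r s M" using argmax_supp[OF fP P0] by blast
  obtain N where N: "N \<in> supp Q" "\<forall>x\<in>supp Q. key l r s x \<le> key l r s N" using argmax_supp[OF fQ Q0] by blast
  have "vval l r s (Gm S T c P Q) = gf l r s (M + N)"
    using vval_char[OF finite_supp_Gm[OF g fP fQ] top_max[OF g l rs M N fP fQ]] .
  also have "\<dots> = vval l r s P + vval l r s Q" using vval_char[OF fP M] vval_char[OF fQ N] gf_add by simp
  finally show ?thesis .
qed

lemma lead_Gm:
  fixes P Q :: "int \<times> nat \<Rightarrow> 'a::field_char_0"
  assumes g: "good l S T c" and l: "l > 0" and rs: "r + s > 0"
    and fP: "finite (supp P)" and fQ: "finite (supp Q)"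
    and P0: "P \<noteq> (\<lambda>_. 0)" and Q0: "Q \<noteq> (\<lambda>_. 0)"
  shows "lead l r s (Gm S T c P Q) = Lmult (lead l r s P) (lead l r s Q)"
proof (rule ext)
  fix e
  have rs': "r + s \<ge> 0" using rs by simp
  obtain M where M: "M \<in> supp P" "\<forall>x\<in>supp P. key l r s x \<le> key l r s M" using argmax_supp[OF fP P0] by blast
  obtain N where N: "N \<in> supp Q" "\<forall>x\<in>supp Q. key l r s x \<le> key l r s N" using argmax_supp[OF fQ Q0] by blast
  let ?vP = "vval l r s P" and ?vQ = "vval l r s Q"
  have vG: "vval l r s (Gm S T c P Q) = ?vP + ?vQ" by (rule vval_Gm[OF g l rs' fP fQ P0 Q0])
  have gP: "gf l r s x \<le> ?vP" if "x \<in> supp P" for x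
    using vval_char[OF fP M] M(2) that key_le_gf by metis
  have gQ: "gf l r s y \<le> ?vQ" if "y \<in> supp Q" for y
    using vval_char[OF fQ N] N(2) that key_le_gf by metis
  show "lead l r s (Gm S T c P Q) e = Lmult (lead l r s P) (lead l r s Q) e"
  proof (cases "gf l r s e = ?vP + ?vQ")
    case True
    have "lead l r s (Gm S T c P Q) e = Gm S T c P Q e" using True vG by (simp add: lead_gf)
    also have "\<dots> = (\<Sum>x\<in>supp P. \<Sum>y\<in>supp Q. if e = x + y then lead l r s P x * lead l r s Q y else 0)"
      unfolding Gm_def
    proof (intro sum.cong refl)
      fix x y assume x: "x \<in> supp P" and y: "y \<in> supp Q"
      let ?F = "\<lambda>m. if e = T x y m then c x y m * P x * Q y else 0"
      have "(\<Sum>m\<in>S x. ?F m) = (\<Sum>m\<in>S x. if m = 0 then ?F 0 else 0)"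
      proof (intro sum.cong refl)
        fix m assume m: "m \<in> S x"
        show "?F m = (if m = 0 then ?F 0 else 0)"
        proof (cases "m = 0")
          case False
          have "e \<noteq> T x y m"
          proof
            assume et: "e = T x y m"
            have "gf l r s (T x y m) < gf l r s x + gf l r s y"
              using gf_shift[OF rs goodD(5)[OF g m False] False] .
            then have "gf l r s e < gf l r s x + gf l r s y" using et by simp
            with True gP[OF x] gQ[OF y] show False by linarith
          qed
          with False show ?thesis by simp
        qed simp
      qed
      also have "\<dots> = ?F 0" using sum.delta[of "S x" 0 "\<lambda>_. ?F 0"] goodD(1,2)[OF g] by simp
      also have "\<dots> = (if e = x + y then lead l r s P x * lead l r s Q y else 0)"
      proof (cases "e = x + y")
        case True2: True
        then have "gf l r s x + gf l r s y = ?vP + ?vQ" using True gf_add by metis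
        then have "gf l r s x = ?vP" "gf l r s y = ?vQ" using gP[OF x] gQ[OF y] by linarith+
        then show ?thesis using True2 goodD(3,4)[OF g] by (simp add: lead_gf)
      next
        case False
        then show ?thesis using goodD(3)[OF g] by simp
      qed
      finally show "(\<Sum>m\<in>S x. ?F m) = (if e = x + y then lead l r s P x * lead l r s Q y else 0)" .
    qed
    also have "\<dots> = Lmult (lead l r s P) (lead l r s Q) e"
      by (intro Lmult_super[symmetric] fP fQ supp_lead)
    finally show ?thesis .
  next
    case False
    have "lead l r s (Gm S T c P Q) e = 0" using False vG by (simp add: lead_gf)
    moreover have "Lmult (lead l r s P) (lead l r s Q) e = 0"
      unfolding Lmult_def
    proof (intro sum.neutral ballI)
      fix x y assume x: "x \<in> supp (lead l r s P)" and y: "y \<in> supp (lead l r s Q)"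
      have "gf l r s x = ?vP" using x by (auto simp: supp_def lead_gf split: if_splits)
      moreover have "gf l r s y = ?vQ" using y by (auto simp: supp_def lead_gf split: if_splits)
      ultimately have "e \<noteq> x + y" using False gf_add by metis
      then show "(if e = x + y then lead l r s P x * lead l r s Q y else 0) = 0" by simp
    qed
    ultimately show ?thesis by simp
  qed
qed


lemma Wmult_Gm: "Wmult l P Q = Gm (\<lambda>x. {..snd x}) (\<lambda>x y m. (fst x + fst y - int m * int l, snd x + snd y - m))
   (\<lambda>x y m. of_nat (snd x choose m) * (\<Prod>t<m. of_int (fst y) / of_nat l - of_nat t)) P Q"
  by (simp add: Wmult_def Gm_def)

lemma Lmult_Gm: "Lmult P Q = Gm (\<lambda>x. {0}) (\<lambda>x y m. x + y) (\<lambda>_ _ _. 1) P Q"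
  unfolding Lmult_def Gm_def by (simp only: sum.insert finite.emptyI empty_iff not_False_eq_True sum.empty add_0_right mult_1_left)

lemma good_L: "good l (\<lambda>x. {0}) (\<lambda>x y m. x + y) (\<lambda>_ _ _. 1)"
  by (simp add: good_def)

lemma good_W: 
  assumes l: "l > 0"
  shows "good l (\<lambda>x. {..snd x}) (\<lambda>x y m. (fst x + fst y - int m * int l, snd x + snd y - m))
   (\<lambda>x y m. of_nat (snd x choose m) * (\<Prod>t<m. of_int (fst y) / of_nat l - (of_nat t::'a::field_char_0)))"
  unfolding good_def
proof (intro conjI allI impI)
  fix x y :: "int \<times> nat" and m :: nat
  show "finite {..snd x}" "0 \<in> {..snd x}" by auto
  show "(fst x + fst y - int 0 * int l, snd x + snd y - 0) = x + y" by (simp add: prod_eq_iff)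
  show "of_nat (snd x choose 0) * (\<Prod>t<0. of_int (fst y) / of_nat l - (of_nat t::'a)) = 1" by simp
  assume m: "m \<in> {..snd x}" "m \<noteq> 0"
  then have mle: "m \<le> snd x + snd y" by auto
  have 1: "(of_int (fst x + fst y - int m * int l) / of_nat l :: rat) = of_int (fst x) / of_nat l + of_int (fst y) / of_nat l - of_nat m"
    using l by (simp add: field_simps)
  have 2: "(of_nat (snd x + snd y - m) :: rat) = of_nat (snd x) + of_nat (snd y) - of_nat m"
    using mle by (simp add: of_nat_diff)
  show "dec l (fst x + fst y - int m * int l, snd x + snd y - m) = dec l x + dec l y - (of_nat m, of_nat m)"
    using 1 2 by (simp add: dec_def prod_eq_iff)
qed

lemma part1:
  fixes P Q :: "int \<times> nat \<Rightarrow> 'a::field_char_0"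
  assumes g: "good l S T c" and l: "l > 0"
    and fP: "finite (supp P)" and fQ: "finite (supp Q)"
    and P0: "P \<noteq> (\<lambda>_. 0)" and Q0: "Q \<noteq> (\<lambda>_. 0)"
  shows "wpt l (Gm S T c P Q) = wpt l P + wpt l Q" "wbar l (Gm S T c P Q) = wbar l P + wbar l Q"
    "Gm S T c P Q \<noteq> (\<lambda>_. 0)" "finite (supp (Gm S T c P Q))"
proof -
  have r1: "(1::int) + - 1 \<ge> 0" and r2: "- (1::int) + 1 \<ge> 0" by simp_all
  obtain M where M: "M \<in> supp P" "\<forall>x\<in>supp P. key l 1 (-1) x \<le> key l 1 (-1) M" using argmax_supp[OF fP P0] by blast
  obtain N where N: "N \<in> supp Q" "\<forall>x\<in>supp Q. key l 1 (-1) x \<le> key l 1 (-1) N" using argmax_supp[OF fQ Q0] by blast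
  note tm = top_max[OF g l r1 M N fP fQ]
  show "wpt l (Gm S T c P Q) = wpt l P + wpt l Q"
    using wpt_char[OF l tm] wpt_char[OF l M] wpt_char[OF l N] dec_add by simp
  show "Gm S T c P Q \<noteq> (\<lambda>_. 0)" using tm(1) by (auto simp: supp_def)
  obtain M' where M': "M' \<in> supp P" "\<forall>x\<in>supp P. key l (-1) 1 x \<le> key l (-1) 1 M'" using argmax_supp[OF fP P0] by blast
  obtain N' where N': "N' \<in> supp Q" "\<forall>x\<in>supp Q. key l (-1) 1 x \<le> key l (-1) 1 N'" using argmax_supp[OF fQ Q0] by blast
  note tm' = top_max[OF g l r2 M' N' fP fQ]
  show "wbar l (Gm S T c P Q) = wbar l P + wbar l Q"
    using wbar_char[OF l tm'] wbar_char[OF l M'] wbar_char[OF l N'] dec_add by simp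
  show "finite (supp (Gm S T c P Q))" by (rule finite_supp_Gm[OF g fP fQ])
qed

lemma lead_props:
  assumes f: "finite (supp P)" and P0: "P \<noteq> (\<lambda>_. 0)"
  shows "finite (supp (lead l r s P))" "lead l r s P \<noteq> (\<lambda>_. 0)"
proof -
  show "finite (supp (lead l r s P))" using finite_subset[OF supp_lead f] .
  obtain M where M: "M \<in> supp P" "\<forall>x\<in>supp P. key l r s x \<le> key l r s M" using argmax_supp[OF f P0] by blast
  have "lead l r s P M = P M" using vval_char[OF f M] by (simp add: lead_gf)
  then show "lead l r s P \<noteq> (\<lambda>_. 0)" using M(1) by (auto simp: supp_def)
qed

lemma allG:
  fixes P Q :: "int \<times> nat \<Rightarrow> 'a::field_char_0"
  assumes g: "good l S T c" and l: "l > 0"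
    and fP: "finite (supp P)" and fQ: "finite (supp Q)"
    and P0: "P \<noteq> (\<lambda>_. 0)" and Q0: "Q \<noteq> (\<lambda>_. 0)"
  shows "wpt l (Gm S T c P Q) = wpt l P + wpt l Q
    \<and> wbar l (Gm S T c P Q) = wbar l P + wbar l Q
    \<and> Gm S T c P Q \<noteq> (\<lambda>_. 0)
    \<and> (\<forall>(\<rho>, \<sigma>) \<in> V. lead l \<rho> \<sigma> (Gm S T c P Q) = Lmult (lead l \<rho> \<sigma> P) (lead l \<rho> \<sigma> Q))
    \<and> (\<forall>(\<rho>, \<sigma>) \<in> Vbar. vval l \<rho> \<sigma> (Gm S T c P Q) = vval l \<rho> \<sigma> P + vval l \<rho> \<sigma> Q)
    \<and> (\<forall>(\<rho>, \<sigma>) \<in> V. st l \<rho> \<sigma> (Gm S T c P Q) = st l \<rho> \<sigma> P + st l \<rho> \<sigma> Q)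
    \<and> (\<forall>(\<rho>, \<sigma>) \<in> V. en l \<rho> \<sigma> (Gm S T c P Q) = en l \<rho> \<sigma> P + en l \<rho> \<sigma> Q)"
proof (intro conjI)
  note p1 = part1[OF g l fP fQ P0 Q0]
  show "wpt l (Gm S T c P Q) = wpt l P + wpt l Q" by (rule p1(1))
  show "wbar l (Gm S T c P Q) = wbar l P + wbar l Q" by (rule p1(2))
  show "Gm S T c P Q \<noteq> (\<lambda>_. 0)" by (rule p1(3))
  have ld: "lead l r s (Gm S T c P Q) = Lmult (lead l r s P) (lead l r s Q)" if "(r, s) \<in> V" for r s
    using that lead_Gm[OF g l _ fP fQ P0 Q0] by (auto simp: V_def)
  then show "\<forall>(\<rho>, \<sigma>) \<in> V. lead l \<rho> \<sigma> (Gm S T c P Q) = Lmult (lead l \<rho> \<sigma> P) (lead l \<rho> \<sigma> Q)" by auto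
  show "\<forall>(\<rho>, \<sigma>) \<in> Vbar. vval l \<rho> \<sigma> (Gm S T c P Q) = vval l \<rho> \<sigma> P + vval l \<rho> \<sigma> Q"
    using vval_Gm[OF g l _ fP fQ P0 Q0] by (auto simp: Vbar_def)
  have L1: "wpt l (Lmult A B) = wpt l A + wpt l B" "wbar l (Lmult A B) = wbar l A + wbar l B"
    if "finite (supp A)" "finite (supp B)" "A \<noteq> (\<lambda>_. 0)" "B \<noteq> (\<lambda>_. 0)" for A B :: "int \<times> nat \<Rightarrow> 'a"
    using part1[OF good_L l that] by (simp_all add: Lmult_Gm)
  have st: "st l r s (Gm S T c P Q) = st l r s P + st l r s Q \<and> en l r s (Gm S T c P Q) = en l r s P + en l r s Q"
    if "(r, s) \<in> V" for r s
    unfolding st_def en_def ld[OF that]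
    using L1[OF lead_props(1)[OF fP P0] lead_props(1)[OF fQ Q0] lead_props(2)[OF fP P0] lead_props(2)[OF fQ Q0]]
    by simp
  then show "\<forall>(\<rho>, \<sigma>) \<in> V. st l \<rho> \<sigma> (Gm S T c P Q) = st l \<rho> \<sigma> P + st l \<rho> \<sigma> Q" by auto
  show "\<forall>(\<rho>, \<sigma>) \<in> V. en l \<rho> \<sigma> (Gm S T c P Q) = en l \<rho> \<sigma> P + en l \<rho> \<sigma> Q" using st by auto
qed

theorem proposition1p8:
  fixes l :: nat and P Q :: "int \<times> nat \<Rightarrow> 'a::field_char_0"
  assumes "l > 0"
    and "finite (supp P)" and "finite (supp Q)"
    and "P \<noteq> (\<lambda>_. 0)" and "Q \<noteq> (\<lambda>_. 0)"
  shows "\<forall>mul \<in> {Wmult l, Lmult}.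
      wpt l (mul P Q) = wpt l P + wpt l Q
    \<and> wbar l (mul P Q) = wbar l P + wbar l Q
    \<and> mul P Q \<noteq> (\<lambda>_. 0)
    \<and> (\<forall>(\<rho>, \<sigma>) \<in> V. lead l \<rho> \<sigma> (mul P Q) = Lmult (lead l \<rho> \<sigma> P) (lead l \<rho> \<sigma> Q))
    \<and> (\<forall>(\<rho>, \<sigma>) \<in> Vbar. vval l \<rho> \<sigma> (mul P Q) = vval l \<rho> \<sigma> P + vval l \<rho> \<sigma> Q)
    \<and> (\<forall>(\<rho>, \<sigma>) \<in> V. st l \<rho> \<sigma> (mul P Q) = st l \<rho> \<sigma> P + st l \<rho> \<sigma> Q)
    \<and> (\<forall>(\<rho>, \<sigma>) \<in> V. en l \<rho> \<sigma> (mul P Q) = en l \<rho> \<sigma> P + en l \<rho> \<sigma> Q)"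
proof -
  note W = allG[OF good_W[OF assms(1)] assms(1-5)]
  note L = allG[OF good_L assms(1-5)]
  show ?thesis
  proof (intro ballI)
    fix mul :: "(int \<times> nat \<Rightarrow> 'a) \<Rightarrow> (int \<times> nat \<Rightarrow> 'a) \<Rightarrow> int \<times> nat \<Rightarrow> 'a"
    assume "mul \<in> {Wmult l, Lmult}"
    then have "mul = Wmult l \<or> mul = Lmult" by simp
    then show "wpt l (mul P Q) = wpt l P + wpt l Q
    \<and> wbar l (mul P Q) = wbar l P + wbar l Q
    \<and> mul P Q \<noteq> (\<lambda>_. 0)
    \<and> (\<forall>(\<rho>, \<sigma>) \<in> V. lead l \<rho> \<sigma> (mul P Q) = Lmult (lead l \<rho> \<sigma> P) (lead l \<rho> \<sigma> Q))
    \<and> (\<forall>(\<rho>, \<sigma>) \<in> Vbar. vval l \<rho> \<sigma> (mul P Q) = vval l \<rho> \<sigma> P + vval l \<rho> \<sigma> Q)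
    \<and> (\<forall>(\<rho>, \<sigma>) \<in> V. st l \<rho> \<sigma> (mul P Q) = st l \<rho> \<sigma> P + st l \<rho> \<sigma> Q)
    \<and> (\<forall>(\<rho>, \<sigma>) \<in> V. en l \<rho> \<sigma> (mul P Q) = en l \<rho> \<sigma> P + en l \<rho> \<sigma> Q)"
    proof (elim disjE)
      assume "mul = Wmult l"
      then have eq: "mul P Q = Gm (\<lambda>x. {..snd x}) (\<lambda>x y m. (fst x + fst y - int m * int l, snd x + snd y - m))
        (\<lambda>x y m. of_nat (snd x choose m) * (\<Prod>t<m. of_int (fst y) / of_nat l - of_nat t)) P Q"
        using Wmult_Gm by simp
      show ?thesis unfolding eq by (rule W)
    next
      assume "mul = Lmult"
      then have eq: "mul P Q = Gm (\<lambda>x. {0}) (\<lambda>x y m. x + y) (\<lambda>_ _ _. 1) P Q"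
        using Lmult_Gm by simp
      show ?thesis unfolding eq by (rule L)
    qed
  qed
qed

end
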